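(* Let $s,t,z$ be positive integers, let $\lambda$ be an integer with $0\le\lambda\le z$, and put $\theta=ts+\lambda$. Let $A_{i,j}$ ($0\le i\le t-1$, $0\le j\le s-1$) be matrices of size $\frac{m}{t}\times\frac{m}{s}$ and $B_{k,l}$ ($0\le k\le s-1$, $0\le l\le t-1$) matrices of size $\frac ms\times\frac mt$ over a field, and define $C_A(x)=\sum_{i=0}^{t-1}\sum_{j=0}^{s-1}A_{i,j}x^{j+is}$, $C_B(x)=\sum_{k=0}^{s-1}\sum_{l=0}^{t-1}B_{k,l}x^{(s-1-k)+\theta l}$, $C_Y(x)=C_A(x)C_B(x)$. Then the $t^2$ integers $s-1+si+\theta l$ ($0\le i,l\le t-1$) are pairwise distinct, and for every $i,l\in\{0,\dots,t-1\}$ the coefficient of $x^{s-1+si+\theta l}$ in $C_Y(x)$ is $\sum_{j=0}^{s-1}A_{i,j}B_{j,l}$; that is, every block $Y_{i,l}=\sum_{j}A_{i,j}B_{j,l}$ of $Y=A^TB$ can be read off from $C_Y$.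
   Context: $A_{i,j}$ are the blocks of $A^T$ and $B_{k,l}$ the blocks of $B$ when $A,B\in\mathbb F^{m\times m}$ are split into $s$ row-wise and $t$ column-wise parts; these are the Adaptive Gap Entangled (AGE) codes with parameter $\lambda$. *)

theory Defs
  imports "HOL-Analysis.Analysis"
begin

text \<open>Matrix blocks are elements of the type-indexed matrix spaces of HOL-Analysis:
  A i j :: 'a^'q^'p  (a p x q matrix, p = m/t, q = m/s),
  B k l :: 'a^'p^'q  (a q x p matrix).
  A matrix polynomial is represented by its coefficient sequence (nat => matrix).\<close>

definition CA_coeff :: "nat \<Rightarrow> nat \<Rightarrow> (nat \<Rightarrow> nat \<Rightarrow> 'a::field^'q^'p) \<Rightarrow> nat \<Rightarrow> 'a^'q^'p" where
  "CA_coeff s t A e = (\<Sum>i<t. \<Sum>j<s. if j + i * s = e then A i j else 0)"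

definition CB_coeff :: "nat \<Rightarrow> nat \<Rightarrow> nat \<Rightarrow> (nat \<Rightarrow> nat \<Rightarrow> 'a::field^'p^'q) \<Rightarrow> nat \<Rightarrow> 'a^'p^'q" where
  "CB_coeff s t \<theta> B e = (\<Sum>k<s. \<Sum>l<t. if (s - 1 - k) + \<theta> * l = e then B k l else 0)"

definition CY_coeff :: "nat \<Rightarrow> nat \<Rightarrow> nat \<Rightarrow> (nat \<Rightarrow> nat \<Rightarrow> 'a::field^'q^'p)
    \<Rightarrow> (nat \<Rightarrow> nat \<Rightarrow> 'a^'p^'q) \<Rightarrow> nat \<Rightarrow> 'a^'p^'p" where
  "CY_coeff s t \<theta> A B e = (\<Sum>a\<le>e. CA_coeff s t A a ** CB_coeff s t \<theta> B (e - a))"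

end

theory Submission
  imports Defs
begin

lemma mm_add_rdistrib: "((A::'a::semiring_1^'n^'m) + B) ** (C::'a^'p^'n) = A ** C + B ** C"
  by (vector matrix_matrix_mult_def sum.distrib[symmetric] field_simps)

lemma if_mm: "(if c then (X::'a::semiring_1^'n^'m) else 0) ** (if d then (Y::'a^'p^'n) else 0) = (if c \<and> d then X ** Y else 0)"
  by simp

lemma sum_eq_single_if:
  assumes "finite S" "c \<in> S"
  shows "(\<Sum>x\<in>S. if x = c \<and> P then f x else 0) = (if P then f c else (0::'b::comm_monoid_add))"
  using assms by (cases P) (simp_all add: sum.delta')

lemma mm_sum_left: "(sum f S) ** (B::'a::semiring_1^'p^'n) = (\<Sum>x\<in>S. (f x :: 'a^'n^'m) ** B)"
  by (induction S rule: infinite_finite_induct) (auto simp: mm_add_rdistrib)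

lemma mm_sum_right: "(A::'a::semiring_1^'n^'m) ** (sum f S) = (\<Sum>x\<in>S. A ** (f x :: 'a^'p^'n))"
  by (induction S rule: infinite_finite_induct) (auto simp: matrix_add_ldistrib)

lemma key:
  fixes s t lam \<theta> i l i' j' k l' :: nat
  assumes "s > 0" "\<theta> = t * s + lam" "i < t" "l < t" "i' < t" "l' < t" "j' < s" "k < s"
  shows "(j' + i' * s + (s - 1 - k) + \<theta> * l' = s - 1 + s * i + \<theta> * l) \<longleftrightarrow> (i' = i \<and> l' = l \<and> j' = k)"
proof
  assume eq: "j' + i' * s + (s - 1 - k) + \<theta> * l' = s - 1 + s * i + \<theta> * l"
  have eqi: "int j' - int k + int i' * int s + int \<theta> * int l' = int s * int i + int \<theta> * int l"
  proof -
    have n: "j' + i' * s + \<theta> * l' = s * i + \<theta> * l + k" using eq assms by linarith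
    have "int (j' + i' * s + \<theta> * l') = int (s * i + \<theta> * l + k)" using n by simp
    then show ?thesis by (simp only: of_nat_add of_nat_mult)
  qed
  have b1: "i' * s + s \<le> t * s" using assms mult_le_mono1[of "Suc i'" t s] by simp
  have b2: "i * s + s \<le> t * s" using assms mult_le_mono1[of "Suc i" t s] by simp
  have b1': "int i' * int s + int s \<le> int t * int s" using b1 by (metis of_nat_add of_nat_le_iff of_nat_mult)
  have b2': "int i * int s + int s \<le> int t * int s" using b2 by (metis of_nat_add of_nat_le_iff of_nat_mult)
  have th: "int \<theta> \<ge> int t * int s" using assms by simp
  have ll: "l' = l"
  proof (rule ccontr)
    assume "l' \<noteq> l"
    then consider "l' + 1 \<le> l" | "l + 1 \<le> l'" by linarith
    then show False
    proof cases
      case 1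
      then have "\<theta> * l' + \<theta> \<le> \<theta> * l" using mult_le_mono2[OF 1, of \<theta>] by simp
      then have "int \<theta> * int l' + int \<theta> \<le> int \<theta> * int l" by (metis of_nat_add of_nat_le_iff of_nat_mult)
      moreover have "int s * int i \<ge> 0" by simp
      ultimately show False using eqi b1' th assms(7) by linarith
    next
      case 2
      then have "\<theta> * l + \<theta> \<le> \<theta> * l'" using mult_le_mono2[OF 2, of \<theta>] by simp
      then have "int \<theta> * int l + int \<theta> \<le> int \<theta> * int l'" by (metis of_nat_add of_nat_le_iff of_nat_mult)
      moreover have "int i' * int s \<ge> 0" by simp
      moreover have "int s * int i = int i * int s" by (simp add: mult.commute)
      ultimately show False using eqi b2' th assms(8) by linarith
    qed
  qed
  with eqi have eq2: "int j' - int k + int i' * int s = int s * int i" by simp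
  have ii: "i' = i"
  proof (rule ccontr)
    assume "i' \<noteq> i"
    then consider "i' + 1 \<le> i" | "i + 1 \<le> i'" by linarith
    then show False
    proof cases
      case 1
      then have "s * i' + s \<le> s * i" using mult_le_mono2[OF 1, of s] by simp
      then have "int s * int i' + int s \<le> int s * int i" by (metis of_nat_add of_nat_le_iff of_nat_mult)
      moreover have "int s * int i' = int i' * int s" by (simp add: mult.commute)
      ultimately show False using eq2 assms(7,8) by linarith
    next
      case 2
      then have "s * i + s \<le> s * i'" using mult_le_mono2[OF 2, of s] by simp
      then have "int s * int i + int s \<le> int s * int i'" by (metis of_nat_add of_nat_le_iff of_nat_mult)
      moreover have "int s * int i' = int i' * int s" by (simp add: mult.commute)
      ultimately show False using eq2 assms(7,8) by linarith
    qed
  qed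
  with eq2 have "j' = k" by (simp add: mult.commute)
  with ll ii show "i' = i \<and> l' = l \<and> j' = k" by simp
next
  assume "i' = i \<and> l' = l \<and> j' = k"
  then show "j' + i' * s + (s - 1 - k) + \<theta> * l' = s - 1 + s * i + \<theta> * l" using assms by (simp add: mult.commute)
qed

lemma collapse_a:
  fixes c d e :: nat
  shows "(\<Sum>a\<le>e. if c = a \<and> d = e - a then M else 0) = (if c + d = e then M else (0::'b::comm_monoid_add))"
proof -
  have "(\<Sum>a\<le>e. if c = a \<and> d = e - a then M else 0) = (\<Sum>a\<le>e. if a = c then (if d = e - c then M else 0) else 0)"
    by (rule sum.cong) auto
  also have "\<dots> = (if c \<le> e then (if d = e - c then M else 0) else 0)"
    by (simp add: sum.delta')
  also have "\<dots> = (if c + d = e then M else 0)" by auto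
  finally show ?thesis .
qed

theorem theorem3:
  fixes s t z lam \<theta> :: nat
    and A :: "nat \<Rightarrow> nat \<Rightarrow> 'a::field^'q^'p"
    and B :: "nat \<Rightarrow> nat \<Rightarrow> 'a^'p^'q"
  assumes "s > 0" and "t > 0" and "z > 0"
    and "lam \<le> z"
    and "\<theta> = t * s + lam"
  shows "inj_on (\<lambda>(i, l). s - 1 + s * i + \<theta> * l) ({..<t} \<times> {..<t})
    \<and> (\<forall>i<t. \<forall>l<t. CY_coeff s t \<theta> A B (s - 1 + s * i + \<theta> * l) = (\<Sum>j<s. A i j ** B j l))"
proof
  show "inj_on (\<lambda>(i, l). s - 1 + s * i + \<theta> * l) ({..<t} \<times> {..<t})"
  proof (rule inj_onI)
    fix x y assume hx: "x \<in> {..<t} \<times> {..<t}" and hy: "y \<in> {..<t} \<times> {..<t}"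
      and hxy: "(\<lambda>(i, l). s - 1 + s * i + \<theta> * l) x = (\<lambda>(i, l). s - 1 + s * i + \<theta> * l) y"
    obtain i l where xi: "x = (i, l)" by (cases x)
    obtain i' l' where yi: "y = (i', l')" by (cases y)
    have h: "i < t" "l < t" "i' < t" "l' < t" using hx hy xi yi by auto
    have h5: "s - 1 + s * i + \<theta> * l = s - 1 + s * i' + \<theta> * l'" using hxy xi yi by simp
    have s0: "0 < s" using assms by simp
    have "0 + i * s + (s - 1 - 0) + \<theta> * l = s - 1 + s * i' + \<theta> * l'"
      using h5 by (simp add: mult.commute)
    then have "i = i' \<and> l = l'"
      using key[of s \<theta> t lam i' l' i l 0 0, OF s0 assms(5) h(3) h(4) h(1) h(2) s0 s0] by blast
    then show "x = y" using xi yi by simp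
  qed
next
  show "\<forall>i<t. \<forall>l<t. CY_coeff s t \<theta> A B (s - 1 + s * i + \<theta> * l) = (\<Sum>j<s. A i j ** B j l)"
  proof (intro allI impI)
    fix i l assume il: "i < t" "l < t"
    define e where "e = s - 1 + s * i + \<theta> * l"
    have "CY_coeff s t \<theta> A B e = (\<Sum>a\<le>e. \<Sum>i'<t. \<Sum>j'<s. \<Sum>k<s. \<Sum>l'<t.
        if j' + i' * s = a \<and> (s - 1 - k) + \<theta> * l' = e - a then A i' j' ** B k l' else 0)"
      unfolding CY_coeff_def CA_coeff_def CB_coeff_def
      by (simp only: mm_sum_left, simp only: mm_sum_right if_mm)
    also have "\<dots> = (\<Sum>i'<t. \<Sum>j'<s. \<Sum>k<s. \<Sum>l'<t. \<Sum>a\<le>e.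
        if j' + i' * s = a \<and> (s - 1 - k) + \<theta> * l' = e - a then A i' j' ** B k l' else 0)"
      apply (subst sum.swap[where A="{..e}"]) apply (rule sum.cong, rule refl)
      apply (subst sum.swap[where A="{..e}"]) apply (rule sum.cong, rule refl)
      apply (subst sum.swap[where A="{..e}"]) apply (rule sum.cong, rule refl)
      apply (subst sum.swap[where A="{..e}"]) apply (rule refl) done
    also have "\<dots> = (\<Sum>i'<t. \<Sum>j'<s. \<Sum>k<s. \<Sum>l'<t.
        if j' + i' * s + (s - 1 - k) + \<theta> * l' = e then A i' j' ** B k l' else 0)"
      by (simp only: collapse_a add.assoc)
    also have "\<dots> = (\<Sum>i'<t. \<Sum>j'<s. \<Sum>k<s. \<Sum>l'<t.
        if i' = i \<and> l' = l \<and> j' = k then A i' j' ** B k l' else 0)"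
      unfolding e_def
      by (intro sum.cong refl) (simp only: key[OF assms(1) assms(5) il] lessThan_iff)
    also have "\<dots> = (\<Sum>i'<t. \<Sum>j'<s. \<Sum>k<s. if i' = i \<and> j' = k then A i' j' ** B k l else 0)"
      apply (intro sum.cong refl)
      subgoal for i' j' k using il sum_eq_single_if[where S="{..<t}" and c=l and f="\<lambda>l'. A i' j' ** B k l'" and P="i' = i \<and> j' = k"]
        by (simp add: conj_ac)
      done
    also have "\<dots> = (\<Sum>i'<t. \<Sum>j'<s. if i' = i then A i' j' ** B j' l else 0)"
      apply (intro sum.cong refl)
      subgoal for i' j' using sum_eq_single_if[where S="{..<s}" and c=j' and f="\<lambda>k. A i' j' ** B k l" and P="i' = i"]
        by (simp add: eq_commute[of j'] conj_ac)
      done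
    also have "\<dots> = (\<Sum>j'<s. \<Sum>i'<t. if i' = i then A i' j' ** B j' l else 0)"
      by (rule sum.swap)
    also have "\<dots> = (\<Sum>j<s. A i j ** B j l)"
      using il by (simp add: sum.delta') 
    finally show "CY_coeff s t \<theta> A B (s - 1 + s * i + \<theta> * l) = (\<Sum>j<s. A i j ** B j l)"
      unfolding e_def .
  qed
qed

end
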